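(* Let $\lambda:\mathbb R_+\to\mathbb R_+$ satisfy (A1), and suppose $\lambda(u)\le ku$ for all $u\ge0$ for some $k>0$ with $kh<\alpha$. Then $\delta_0$ is the only invariant probability measure of (NL), and it is globally attractive: if $\eta_t$ denotes the law at time $t$ of a solution of (NL) with initial law $\eta_0$ (with finite first moment), then for all $t\ge0$ $$W_1(\eta_t,\delta_0)\le e^{-(\alpha-kh)t}W_1(\eta_0,\delta_0).$$
   Context: Assumption (A1): $\lambda$ is bounded, increasing, Lipschitz, and $\lambda(0)=0$. Let $h,\alpha>0$ and let $\pi$ be a Poisson random measure on $\mathbb R_+\times\mathbb R_+$ with intensity $ds\,dz$. The nonlinear limit equation (NL) is $\bar U(t)=\bar U(0)-\alpha\int_0^t\bar U(s)ds+h\int_0^t\mathbb E[\lambda(\bar U(s))]ds-\int_{[0,t]\times\mathbb R_+}\bar U(s-)\mathbf 1_{\{z\le\lambda(\bar U(s-))\}}\pi(ds,dz)$, with $\bar U(0)\ge0$ independent of $\pi$. $W_1$ is the order-1 Wasserstein distance on probability measures on $\mathbb R_+$. *)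

theory Defs
  imports "HOL-Probability.Probability"
begin

definition poisson_law :: "real \<Rightarrow> nat measure" where
  "poisson_law m = measure_pmf (if m = 0 then return_pmf 0 else poisson_pmf m)"

definition quadrant :: "(real \<times> real) set" where
  "quadrant = {0..} \<times> {0..}"

definition test_set :: "(real \<times> real) set \<Rightarrow> bool" where
  "test_set A \<longleftrightarrow> A \<in> sets (lborel :: (real \<times> real) measure) \<and> A \<subseteq> quadrant
     \<and> emeasure (lborel :: (real \<times> real) measure) A < \<infinity>"

text \<open>A Poisson random measure on R+ x R+ with intensity ds dz, given by its
  (random) set of atoms.\<close>
definition poisson_random_measure :: "'a measure \<Rightarrow> ('a \<Rightarrow> (real \<times> real) set) \<Rightarrow> bool" where
  "poisson_random_measure M Npts \<longleftrightarrow>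
     (\<forall>\<omega>\<in>space M. Npts \<omega> \<subseteq> quadrant) \<and>
     (\<forall>A. test_set A \<longrightarrow> (AE \<omega> in M. finite (Npts \<omega> \<inter> A))) \<and>
     (\<forall>(F :: nat \<Rightarrow> (real \<times> real) set) n.
        (\<forall>i<n. test_set (F i)) \<and> disjoint_family_on F {..<n} \<longrightarrow>
          prob_space.indep_vars M (\<lambda>_. count_space UNIV) (\<lambda>i \<omega>. card (Npts \<omega> \<inter> F i)) {..<n} \<and>
          (\<forall>i<n. distr M (count_space UNIV) (\<lambda>\<omega>. card (Npts \<omega> \<inter> F i))
                    = poisson_law (measure lborel (F i))))"

definition left_lim :: "(real \<Rightarrow> 'a \<Rightarrow> real) \<Rightarrow> real \<Rightarrow> 'a \<Rightarrow> real" where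
  "left_lim U s \<omega> = (if s \<le> 0 then U 0 \<omega> else Lim (at_left s) (\<lambda>r. U r \<omega>))"

definition NL_solution ::
  "'a measure \<Rightarrow> ('a \<Rightarrow> (real \<times> real) set) \<Rightarrow> real \<Rightarrow> real \<Rightarrow> (real \<Rightarrow> real)
     \<Rightarrow> (real \<Rightarrow> 'a \<Rightarrow> real) \<Rightarrow> bool" where
  "NL_solution M Npts alpha h lam U \<longleftrightarrow>
     (\<forall>t\<ge>0. U t \<in> borel_measurable M) \<and>
     (\<forall>\<omega>\<in>space M. \<forall>t\<ge>0. 0 \<le> U t \<omega>) \<and>
     (\<forall>\<omega>\<in>space M. \<forall>t\<ge>0. continuous (at_right t) (\<lambda>s. U s \<omega>)) \<and>
     (\<forall>\<omega>\<in>space M. \<forall>t>0. \<exists>l. ((\<lambda>s. U s \<omega>) \<longlongrightarrow> l) (at_left t)) \<and>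
     (\<forall>(F :: nat \<Rightarrow> (real \<times> real) set) n.
        (\<forall>i<n. test_set (F i)) \<and> disjoint_family_on F {..<n} \<longrightarrow>
        prob_space.indep_vars M (\<lambda>_. borel)
          (\<lambda>j \<omega>. case j of None \<Rightarrow> U 0 \<omega> | Some i \<Rightarrow> real (card (Npts \<omega> \<inter> F i)))
          (insert None (Some ` {..<n}))) \<and>
     (AE \<omega> in M. \<forall>t\<ge>0.
        U t \<omega> = U 0 \<omega> - alpha * (LINT s:{0..t}|lborel. U s \<omega>)
          + h * (LINT s:{0..t}|lborel. prob_space.expectation M (\<lambda>\<omega>'. lam (U s \<omega>')))
          - (\<Sum>p\<in>{p \<in> Npts \<omega>. fst p \<in> {0..t} \<and> snd p \<le> lam (left_lim U (fst p) \<omega>)}.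
                left_lim U (fst p) \<omega>))"

definition couplings :: "real measure \<Rightarrow> real measure \<Rightarrow> (real \<times> real) measure set" where
  "couplings \<mu> \<nu> = {P. sets P = sets (borel :: (real \<times> real) measure)
       \<and> distr P borel fst = \<mu> \<and> distr P borel snd = \<nu>}"

definition W1 :: "real measure \<Rightarrow> real measure \<Rightarrow> ennreal" where
  "W1 \<mu> \<nu> = (INF P\<in>couplings \<mu> \<nu>. \<integral>\<^sup>+ x. ennreal \<bar>fst x - snd x\<bar> \<partial>P)"

end

theory Submission
  imports Defs
begin


lemma joint_meas:
  fixes M :: "'a measure" and U :: "real \<Rightarrow> 'a \<Rightarrow> real"
  assumes meas: "\<forall>t\<ge>0. U t \<in> borel_measurable M"
    and rc: "\<forall>\<omega>\<in>space M. \<forall>t\<ge>0. continuous (at_right t) (\<lambda>s. U s \<omega>)"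
  shows "(\<lambda>x. U (max 0 (fst x)) (snd x)) \<in> borel_measurable (lborel \<Otimes>\<^sub>M M)"
proof (rule borel_measurable_LIMSEQ_real)
  define q where "q n r = max 0 (real_of_int \<lceil>r * 2^n\<rceil> / 2^n)" for n :: nat and r :: real
  show "(\<lambda>x. U (q n (fst x)) (snd x)) \<in> borel_measurable (lborel \<Otimes>\<^sub>M M)" for n
  proof -
    have 1: "(\<lambda>x. (\<lambda>i::int. \<lambda>x. U (max 0 (real_of_int i / 2^n)) (snd x)) (\<lceil>fst x * (2::real)^n\<rceil>) x)
        \<in> borel_measurable (lborel \<Otimes>\<^sub>M M)"
    proof (rule measurable_compose_countable[where f="\<lambda>i::int. \<lambda>x. U (max 0 (real_of_int i / 2^n)) (snd x)" and g="\<lambda>x. \<lceil>fst x * (2::real)^n\<rceil>"])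
      fix i :: int
      show "(\<lambda>x. U (max 0 (real_of_int i / 2 ^ n)) (snd x)) \<in> borel_measurable (lborel \<Otimes>\<^sub>M M)"
        by (rule measurable_compose[OF measurable_snd]) (use meas in auto)
    next
      show "(\<lambda>x. \<lceil>fst x * (2::real) ^ n\<rceil>) \<in> measurable (lborel \<Otimes>\<^sub>M M) (count_space UNIV)"
      proof -
        have "(\<lambda>x. \<lceil>fst x * (2::real) ^ n\<rceil>) -` {a} \<inter> space (lborel \<Otimes>\<^sub>M M) \<in> sets (lborel \<Otimes>\<^sub>M M)" for a :: int
        proof -
          have "(\<lambda>x. \<lceil>fst x * (2::real) ^ n\<rceil>) -` {a} \<inter> space (lborel \<Otimes>\<^sub>M M)
             = {x \<in> space (lborel \<Otimes>\<^sub>M M). real_of_int a - 1 < fst x * 2^n \<and> fst x * 2^n \<le> real_of_int a}"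
            by (auto simp: ceiling_eq_iff; linarith)
          also have "\<dots> \<in> sets (lborel \<Otimes>\<^sub>M M)" by measurable
          finally show ?thesis .
        qed
        then show ?thesis by (subst measurable_count_space_eq2_countable) auto
      qed
    qed
    then show ?thesis by (simp add: q_def)
  qed
  fix x :: "real \<times> 'a" assume x: "x \<in> space (lborel \<Otimes>\<^sub>M M)"
  then have xs: "snd x \<in> space M" by (auto simp: space_pair_measure)
  define t0 where "t0 = max 0 (fst x)"
  have t0: "t0 \<ge> 0" by (simp add: t0_def)
  have cont: "continuous (at t0 within {t0<..}) (\<lambda>s. U s (snd x))"
    using rc xs t0 by auto
  show "(\<lambda>n. U (q n (fst x)) (snd x)) \<longlonglongrightarrow> U (max 0 (fst x)) (snd x)"
  proof (rule LIMSEQ_I)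
    fix e :: real assume e: "0 < e"
    obtain d where d: "d > 0" and dd: "\<forall>s\<in>{t0<..}. dist s t0 < d \<longrightarrow> dist (U s (snd x)) (U t0 (snd x)) < e"
      using cont e unfolding continuous_within_eps_delta by blast
    obtain N where N: "(1/2::real)^N < d" using real_arch_pow_inv[OF d, of "1/2"] by auto
    show "\<exists>N. \<forall>n\<ge>N. norm (U (q n (fst x)) (snd x) - U (max 0 (fst x)) (snd x)) < e"
    proof (intro exI allI impI)
      fix n assume n: "N \<le> n"
      have p: "(2::real)^n > 0" by simp
      have a: "fst x * 2^n \<le> real_of_int \<lceil>fst x * 2^n\<rceil>" by (rule le_of_int_ceiling)
      have b: "real_of_int \<lceil>fst x * 2^n\<rceil> < fst x * 2^n + 1" by linarith
      have a': "fst x \<le> real_of_int \<lceil>fst x * 2^n\<rceil> / 2^n" using a p by (simp add: field_simps)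
      have b': "real_of_int \<lceil>fst x * 2^n\<rceil> / 2^n < fst x + (1/2)^n" using b p by (simp add: field_simps)
      have pw: "(1/2::real)^n \<le> (1/2)^N" using n by (rule power_decreasing) auto
      have q1: "t0 \<le> q n (fst x)" using a' by (auto simp: q_def t0_def)
      have pd: "(1/2::real)^n < d" using pw N by linarith
      have q2: "q n (fst x) < t0 + d" unfolding q_def t0_def using a' b' pd d by (simp add: max_def)
      show "norm (U (q n (fst x)) (snd x) - U (max 0 (fst x)) (snd x)) < e"
      proof (cases "q n (fst x) = t0")
        case True then show ?thesis using e by (simp add: t0_def)
      next
        case False
        then have "q n (fst x) \<in> {t0<..}" using q1 by auto
        moreover have "dist (q n (fst x)) t0 < d" using q1 q2 by (simp add: dist_real_def)
        ultimately show ?thesis using dd by (auto simp: dist_real_def t0_def)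
      qed
    qed
  qed
qed


lemma set_integrable_const_Ioc: "set_integrable lborel {(s::real)<..t} (\<lambda>_. c::real)"
  unfolding set_integrable_def
  by (rule integrableI_bounded_set_indicator[where B="\<bar>c\<bar>"])
     (auto, cases "s \<le> t", auto)

lemma set_integral_nonneg_real:
  fixes f :: "real \<Rightarrow> real"
  assumes "\<And>x. x \<in> A \<Longrightarrow> 0 \<le> f x"
  shows "0 \<le> (LINT x:A|lborel. f x)"
  unfolding set_lebesgue_integral_def
  using assms by (intro Bochner_Integration.integral_nonneg) (auto simp: indicator_def)

lemma step_bound:
  fixes f :: "real \<Rightarrow> real" and a \<beta> s t :: real
  assumes st: "s \<le> t" and a: "0 \<le> a" and b: "0 \<le> \<beta>"
    and nn: "\<And>r. r \<in> {s..t} \<Longrightarrow> 0 \<le> f r"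
    and int: "set_integrable lborel {s<..t} f"
    and inc: "\<And>r. r \<in> {s..t} \<Longrightarrow> f t - f r \<le> - a * (LINT x:{r<..t}|lborel. f x) + \<beta> * (t - r)"
  shows "f t * (1 + a*(t-s)) \<le> f s + \<beta>*(t-s)*(1+a*(t-s))"
proof -
  have lb: "f t - \<beta>*(t-s) \<le> f r" if r: "r \<in> {s<..t}" for r
  proof -
    have "0 \<le> (LINT x:{r<..t}|lborel. f x)"
      using r nn by (intro set_integral_nonneg_real) auto
    then have "0 \<le> a * (LINT x:{r<..t}|lborel. f x)" using a by simp
    moreover have "f t - f r \<le> - a * (LINT x:{r<..t}|lborel. f x) + \<beta> * (t - r)"
      using r by (intro inc) auto
    ultimately have "f t - f r \<le> \<beta> * (t - r)" by linarith
    moreover have "\<beta> * (t - r) \<le> \<beta> * (t - s)" using r b by (intro mult_left_mono) auto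
    ultimately show ?thesis by linarith
  qed
  have "(LINT x:{s<..t}|lborel. (f t - \<beta>*(t-s))) \<le> (LINT x:{s<..t}|lborel. f x)"
    using lb by (intro set_integral_mono set_integrable_const_Ioc int) auto
  then have I: "(t-s) * (f t - \<beta>*(t-s)) \<le> (LINT x:{s<..t}|lborel. f x)"
    using st by (simp add: set_integral_const)
  have "f t - f s \<le> - a * (LINT x:{s<..t}|lborel. f x) + \<beta> * (t - s)"
    using inc[of s] st by auto
  also have "\<dots> \<le> - a * ((t-s) * (f t - \<beta>*(t-s))) + \<beta> * (t - s)"
    using I a by (simp add: mult_left_mono)
  finally show ?thesis by (simp add: algebra_simps)
qed



lemma exp_decay:
  fixes g :: "real \<Rightarrow> real" and c t :: real
  assumes c: "c > 0" and t: "t \<ge> 0"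
    and step: "\<And>s t'. 0 \<le> s \<Longrightarrow> s \<le> t' \<Longrightarrow> g t' * (1 + c*(t'-s)) \<le> g s"
    and nn: "\<And>s. 0 \<le> s \<Longrightarrow> 0 \<le> g s"
  shows "g t \<le> exp (-c*t) * g 0"
proof -
  have bnd: "g t \<le> g 0 / (1 + c*t/real (Suc n)) ^ Suc n" for n
  proof -
    define h where "h = t / real (Suc n)"
    have h: "h \<ge> 0" using t by (simp add: h_def)
    have q: "1 + c*h > 0" using c h by (simp add: add_pos_nonneg)
    have "g (real j * h) \<le> g 0 / (1 + c*h) ^ j" for j
    proof (induction j)
      case 0 then show ?case by simp
    next
      case (Suc j)
      have "g (real (Suc j) * h) * (1 + c*(real (Suc j) * h - real j * h)) \<le> g (real j * h)"
        using h by (intro step) (auto simp: algebra_simps)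
      then have "g (real (Suc j) * h) * (1 + c*h) \<le> g 0 / (1 + c*h) ^ j"
        using Suc by (simp add: algebra_simps)
      then have "g (real (Suc j) * h) \<le> g 0 / (1 + c*h) ^ j / (1 + c*h)"
        by (simp only: pos_le_divide_eq[OF q])
      then show ?case by (metis divide_divide_eq_left power_Suc mult.commute)
    qed
    from this[of "Suc n"] show ?thesis by (simp add: h_def)
  qed
  have lim: "(\<lambda>n. g 0 / (1 + c*t/real (Suc n)) ^ Suc n) \<longlonglongrightarrow> g 0 / exp (c*t)"
  proof (rule tendsto_divide)
    show "(\<lambda>n. (1 + c*t/real (Suc n)) ^ Suc n) \<longlonglongrightarrow> exp (c*t)"
      using LIMSEQ_Suc[OF tendsto_exp_limit_sequentially[of "c*t"]] by simp
  qed auto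
  have "g t \<le> g 0 / exp (c*t)"
    by (rule LIMSEQ_le_const[OF lim]) (use bnd in auto)
  then show ?thesis by (simp add: exp_minus field_simps)
qed



lemma W1_dirac:
  fixes X :: "'a \<Rightarrow> real"
  assumes P: "prob_space M" and X[measurable]: "X \<in> borel_measurable M"
  shows "W1 (distr M borel X) (return borel 0) = (\<integral>\<^sup>+\<omega>. ennreal \<bar>X \<omega>\<bar> \<partial>M)"
proof (rule antisym)
  interpret prob_space M by fact
  let ?\<mu> = "distr M borel X"
  have sp: "space ?\<mu> \<noteq> {}" by simp
  interpret mu: prob_space ?\<mu> by (rule prob_space_distr) simp
  have pm: "(\<lambda>x::real. (x, 0::real)) \<in> borel_measurable borel"
    by (intro borel_measurable_continuous_onI continuous_intros)
  have dr: "(\<lambda>x::real\<times>real. \<bar>fst x - snd x\<bar>) \<in> borel_measurable borel"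
    by (intro borel_measurable_continuous_onI continuous_intros)
  define P0 where "P0 = distr ?\<mu> borel (\<lambda>x::real. (x, 0::real))"
  have fm: "fst \<in> borel_measurable (borel :: (real \<times> real) measure)"
    by (intro borel_measurable_continuous_onI continuous_intros)
  have sm: "snd \<in> borel_measurable (borel :: (real \<times> real) measure)"
    by (intro borel_measurable_continuous_onI continuous_intros)
  have "P0 \<in> couplings ?\<mu> (return borel 0)"
    unfolding couplings_def P0_def
  proof (intro CollectI conjI)
    show "distr (distr ?\<mu> borel (\<lambda>x. (x, 0::real))) borel fst = ?\<mu>"
      apply (subst distr_distr[OF fm])
      using pm apply simp
      apply (simp add: comp_def)
      apply (rule distr_id2) apply simp
      done
    show "distr (distr ?\<mu> borel (\<lambda>x. (x, 0::real))) borel snd = return borel 0"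
      apply (subst distr_distr[OF sm])
      using pm apply simp
      apply (simp add: comp_def)
      done
  qed simp
  then have "W1 ?\<mu> (return borel 0) \<le> (\<integral>\<^sup>+ x. ennreal \<bar>fst x - snd x\<bar> \<partial>P0)"
    unfolding W1_def by (rule INF_lower)
  also have "\<dots> = (\<integral>\<^sup>+ x. ennreal \<bar>x\<bar> \<partial>?\<mu>)"
  proof -
    have "(\<integral>\<^sup>+ x. ennreal \<bar>fst x - snd x\<bar> \<partial>(distr ?\<mu> borel (\<lambda>x::real. (x, 0::real))))
        = (\<integral>\<^sup>+ x. ennreal \<bar>fst (x, 0::real) - snd (x, 0::real)\<bar> \<partial>?\<mu>)"
      apply (rule nn_integral_distr)
      using pm apply simp
      apply (subst measurable_distr_eq1)
      apply (rule measurable_compose[OF dr])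
      apply measurable
      done
    then show ?thesis by (simp add: P0_def)
  qed
  also have "\<dots> = (\<integral>\<^sup>+\<omega>. ennreal \<bar>X \<omega>\<bar> \<partial>M)"
    by (subst nn_integral_distr) auto
  finally show "W1 ?\<mu> (return borel 0) \<le> (\<integral>\<^sup>+\<omega>. ennreal \<bar>X \<omega>\<bar> \<partial>M)" .
next
  interpret prob_space M by fact
  let ?\<mu> = "distr M borel X"
  have fm: "fst \<in> borel_measurable (borel :: (real \<times> real) measure)"
    by (intro borel_measurable_continuous_onI continuous_intros)
  have sm: "snd \<in> borel_measurable (borel :: (real \<times> real) measure)"
    by (intro borel_measurable_continuous_onI continuous_intros)
  show "(\<integral>\<^sup>+\<omega>. ennreal \<bar>X \<omega>\<bar> \<partial>M) \<le> W1 ?\<mu> (return borel 0)"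
    unfolding W1_def
  proof (rule INF_greatest)
    fix Q assume "Q \<in> couplings ?\<mu> (return borel 0)"
    then have sQ: "sets Q = sets borel" and d1: "distr Q borel fst = ?\<mu>"
      and d2: "distr Q borel snd = return borel 0" by (auto simp: couplings_def)
    have fQ: "fst \<in> borel_measurable Q" using fm by (simp add: measurable_cong_sets[OF sQ refl])
    have sQm: "snd \<in> borel_measurable Q" using sm by (simp add: measurable_cong_sets[OF sQ refl])
    have dm: "(\<lambda>x. \<bar>fst x - snd x\<bar>) \<in> borel_measurable Q" using fQ sQm by measurable
    have "AE y in distr Q borel snd. y = (0::real)" unfolding d2 by (simp add: AE_return)
    then have ae: "AE x in Q. snd x = 0"
      by (subst (asm) AE_distr_iff[OF sQm]) auto
    have "(\<integral>\<^sup>+\<omega>. ennreal \<bar>X \<omega>\<bar> \<partial>M) = (\<integral>\<^sup>+ x. ennreal \<bar>x\<bar> \<partial>?\<mu>)"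
      by (subst nn_integral_distr) auto
    also have "\<dots> = (\<integral>\<^sup>+ x. ennreal \<bar>fst x\<bar> \<partial>Q)"
      unfolding d1[symmetric] by (subst nn_integral_distr[OF fQ]) auto
    also have "\<dots> = (\<integral>\<^sup>+ x. ennreal \<bar>fst x - snd x\<bar> \<partial>Q)"
      by (rule nn_integral_cong_AE) (use ae in auto)
    finally show "(\<integral>\<^sup>+\<omega>. ennreal \<bar>X \<omega>\<bar> \<partial>M) \<le> (\<integral>\<^sup>+ x. ennreal \<bar>fst x - snd x\<bar> \<partial>Q)" by simp
  qed
qed



locale nlset = prob_space M for M :: "'a measure" +
  fixes Npts :: "'a \<Rightarrow> (real \<times> real) set" and lam :: "real \<Rightarrow> real"
    and alpha h B :: real and U :: "real \<Rightarrow> 'a \<Rightarrow> real"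
  assumes prm: "poisson_random_measure M Npts"
    and ap: "alpha > 0" and hp: "h > 0"
    and lam_nn: "\<forall>u\<ge>0. 0 \<le> lam u"
    and lamB: "\<forall>u\<ge>0. lam u \<le> B"
    and lamc: "continuous_on {0..} lam"
    and NL: "NL_solution M Npts alpha h lam U"
begin

lemma meas: "t \<ge> 0 \<Longrightarrow> U t \<in> borel_measurable M"
  using NL unfolding NL_solution_def by auto

lemma Unn: "\<omega> \<in> space M \<Longrightarrow> t \<ge> 0 \<Longrightarrow> 0 \<le> U t \<omega>"
  using NL unfolding NL_solution_def by auto

lemma rc: "\<forall>\<omega>\<in>space M. \<forall>t\<ge>0. continuous (at_right t) (\<lambda>s. U s \<omega>)"
  using NL unfolding NL_solution_def by auto

lemma ll: "\<omega> \<in> space M \<Longrightarrow> t > 0 \<Longrightarrow> \<exists>l. ((\<lambda>s. U s \<omega>) \<longlongrightarrow> l) (at_left t)"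
  using NL unfolding NL_solution_def by auto

lemma B_nn: "0 \<le> B"
  using lam_nn lamB by (meson order.trans order_refl)

lemma Vmeas: "(\<lambda>x. U (max 0 (fst x)) (snd x)) \<in> borel_measurable (lborel \<Otimes>\<^sub>M M)"
  using joint_meas[of U M] meas rc by auto

lemma Vsec: assumes w: "\<omega> \<in> space M" shows "(\<lambda>r. U (max 0 r) \<omega>) \<in> borel_measurable lborel"
  using measurable_compose[OF measurable_Pair2'[OF w] Vmeas] by simp

lemma lam'_cont: "continuous_on UNIV (\<lambda>u. lam (max 0 u))"
  by (rule continuous_on_compose2[OF lamc]) (auto intro!: continuous_intros)

lemma lam'_meas: "(\<lambda>u. lam (max 0 u)) \<in> borel_measurable borel"
  by (rule borel_measurable_continuous_onI[OF lam'_cont])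

lemma left_lim_nn: "\<omega> \<in> space M \<Longrightarrow> 0 \<le> left_lim U s \<omega>"
proof (cases "s \<le> 0")
  case True
  assume "\<omega> \<in> space M" then show ?thesis using True Unn by (simp add: left_lim_def)
next
  case False
  assume w: "\<omega> \<in> space M"
  then obtain l where l: "((\<lambda>r. U r \<omega>) \<longlongrightarrow> l) (at_left s)" using ll False by force
  have "Lim (at_left s) (\<lambda>r. U r \<omega>) = l" by (rule tendsto_Lim[OF _ l]) simp
  moreover have "0 \<le> l"
  proof (rule tendsto_lowerbound[OF l])
    show "\<forall>\<^sub>F r in at_left s. 0 \<le> U r \<omega>"
      using eventually_at_left_real[of 0 s] False
      by (auto elim!: eventually_mono intro: Unn[OF w])
  qed simp
  ultimately show ?thesis using False by (simp add: left_lim_def)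
qed

definition Jmp where
  "Jmp t \<omega> = (\<Sum>p\<in>{p \<in> Npts \<omega>. fst p \<in> {0..t} \<and> snd p \<le> lam (left_lim U (fst p) \<omega>)}. left_lim U (fst p) \<omega>)"

definition mm where "mm s = expectation (\<lambda>\<omega>. lam (U s \<omega>))"

lemma eqn: "AE \<omega> in M. \<forall>t\<ge>0. U t \<omega> = U 0 \<omega> - alpha * (LINT s:{0..t}|lborel. U s \<omega>)
          + h * (LINT s:{0..t}|lborel. mm s) - Jmp t \<omega>"
  using NL unfolding NL_solution_def Jmp_def mm_def by auto

lemma finite_box: "AE \<omega> in M. \<forall>n::nat. finite (Npts \<omega> \<inter> ({0..real n} \<times> {0..B}))"
proof (subst AE_all_countable, intro allI)
  fix n :: nat
  have "test_set ({0..real n} \<times> {0..B})"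
    unfolding test_set_def quadrant_def
  proof (intro conjI)
    show "{0..real n} \<times> {0..B} \<in> sets (lborel :: (real \<times> real) measure)"
      by (simp, intro borel_closed closed_Times) auto
    show "emeasure (lborel :: (real \<times> real) measure) ({0..real n} \<times> {0..B}) < \<infinity>"
      by (intro emeasure_bounded_finite bounded_Times) auto
  qed auto
  then show "AE \<omega> in M. finite (Npts \<omega> \<inter> ({0..real n} \<times> {0..B}))"
    using prm unfolding poisson_random_measure_def by auto
qed

lemma Jmp_nn: "\<omega> \<in> space M \<Longrightarrow> 0 \<le> Jmp t \<omega>"
  unfolding Jmp_def by (intro sum_nonneg left_lim_nn)

lemma Jmp_set_sub:
  assumes w: "\<omega> \<in> space M" and t: "t \<le> real n"
  shows "{p \<in> Npts \<omega>. fst p \<in> {0..t} \<and> snd p \<le> lam (left_lim U (fst p) \<omega>)} \<subseteq> Npts \<omega> \<inter> ({0..real n} \<times> {0..B})"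
proof
  fix p assume p: "p \<in> {p \<in> Npts \<omega>. fst p \<in> {0..t} \<and> snd p \<le> lam (left_lim U (fst p) \<omega>)}"
  have q: "Npts \<omega> \<subseteq> quadrant" using prm w unfolding poisson_random_measure_def by auto
  have "lam (left_lim U (fst p) \<omega>) \<le> B" using lamB left_lim_nn[OF w] by auto
  then show "p \<in> Npts \<omega> \<inter> ({0..real n} \<times> {0..B})"
    using p q t by (cases p) (auto simp: quadrant_def)
qed

lemma Jmp_mono:
  assumes w: "\<omega> \<in> space M" and fin: "\<forall>n::nat. finite (Npts \<omega> \<inter> ({0..real n} \<times> {0..B}))"
    and st: "s \<le> t"
  shows "Jmp s \<omega> \<le> Jmp t \<omega>"
  unfolding Jmp_def
proof (rule sum_mono2)
  obtain n :: nat where n: "t \<le> real n" using real_arch_simple by blast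
  show "finite {p \<in> Npts \<omega>. fst p \<in> {0..t} \<and> snd p \<le> lam (left_lim U (fst p) \<omega>)}"
    using finite_subset[OF Jmp_set_sub[OF w n] fin[rule_format, of n]] .
  show "{p \<in> Npts \<omega>. fst p \<in> {0..s} \<and> snd p \<le> lam (left_lim U (fst p) \<omega>)}
    \<subseteq> {p \<in> Npts \<omega>. fst p \<in> {0..t} \<and> snd p \<le> lam (left_lim U (fst p) \<omega>)}"
    using st by auto
  show "0 \<le> left_lim U (fst b) \<omega>" for b using left_lim_nn[OF w] by auto
qed

lemma lamU_meas: "s \<ge> 0 \<Longrightarrow> (\<lambda>\<omega>. lam (U s \<omega>)) \<in> borel_measurable M"
proof -
  assume s: "s \<ge> 0"
  have "(\<lambda>\<omega>. lam (max 0 (U s \<omega>))) \<in> borel_measurable M"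
    using measurable_compose[OF meas[OF s] lam'_meas] by simp
  then show ?thesis
    by (rule measurable_cong[THEN iffD1, rotated]) (use Unn s in auto)
qed

lemma lamU_int: "s \<ge> 0 \<Longrightarrow> integrable M (\<lambda>\<omega>. lam (U s \<omega>))"
  by (rule integrable_const_bound[where B=B]) (use lamU_meas Unn lam_nn lamB in auto)

lemma mm_nn: assumes s: "s \<ge> 0" shows "0 \<le> mm s"
  unfolding mm_def using Unn lam_nn s by (intro Bochner_Integration.integral_nonneg) auto

lemma mm_le: "s \<ge> 0 \<Longrightarrow> mm s \<le> B"
proof -
  assume s: "s \<ge> 0"
  have "mm s \<le> expectation (\<lambda>_. B)"
    unfolding mm_def using Unn s lamB by (intro integral_mono lamU_int) auto
  then show ?thesis by (simp add: prob_space)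
qed

end


lemma set_int_bdd:
  fixes f g :: "real \<Rightarrow> real"
  assumes A: "A \<in> sets borel" and Asub: "A \<subseteq> {a..b}" and g: "g \<in> borel_measurable borel"
    and eq: "\<And>x. x \<in> A \<Longrightarrow> f x = g x" and bd: "\<And>x. x \<in> A \<Longrightarrow> \<bar>g x\<bar> \<le> C"
  shows "set_integrable lborel A f"
proof -
  have "integrable lborel (\<lambda>x. indicator A x *\<^sub>R g x)"
  proof (rule integrableI_bounded_set_indicator[where B=C])
    show "emeasure lborel A < \<infinity>"
      by (rule emeasure_bounded_finite, rule bounded_subset[OF bounded_cbox[of a b]]) (use Asub in auto)
  qed (use A g bd in auto)
  moreover have "(\<lambda>x. indicator A x *\<^sub>R g x) = (\<lambda>x. indicator A x *\<^sub>R f x)"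
    by (rule ext) (auto simp: indicator_def eq)
  ultimately show ?thesis unfolding set_integrable_def by simp
qed

lemma LINT_const_Icc: "0 \<le> t \<Longrightarrow> (LINT s:{0..t}|lborel. (c::real)) = t * c"
  by (subst set_integral_const) auto

lemma LINT_const_Ioc: "s \<le> t \<Longrightarrow> (LINT x:{s<..t}|lborel. (c::real)) = (t - s) * c"
  by (subst set_integral_const) auto

context nlset
begin

definition mm' where "mm' r = (\<integral>\<omega>. lam (max 0 (U (max 0 r) \<omega>)) \<partial>M)"

lemma mm'_meas: "mm' \<in> borel_measurable borel"
proof -
  have "(\<lambda>x. lam (max 0 (U (max 0 (fst x)) (snd x)))) \<in> borel_measurable (lborel \<Otimes>\<^sub>M M)"
    using measurable_compose[OF Vmeas lam'_meas] by simp
  then have "(\<lambda>r. \<integral>\<omega>. lam (max 0 (U (max 0 r) \<omega>)) \<partial>M) \<in> borel_measurable lborel"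
    by (intro borel_measurable_lebesgue_integral) simp
  then show ?thesis unfolding mm'_def by simp
qed

lemma mm'_eq: "r \<ge> 0 \<Longrightarrow> mm' r = mm r"
  unfolding mm'_def mm_def using Unn by (intro Bochner_Integration.integral_cong) auto

lemma mm_set_int: assumes A: "A \<in> sets borel" "A \<subseteq> {0..b}" shows "set_integrable lborel A mm"
proof (rule set_int_bdd[where g=mm' and C=B, OF A mm'_meas])
  fix x assume "x \<in> A" then have x: "0 \<le> x" using A by auto
  then show "mm x = mm' x" by (simp add: mm'_eq)
  show "\<bar>mm' x\<bar> \<le> B" using mm_nn[OF x] mm_le[OF x] mm'_eq[OF x] by simp
qed

lemma mm_LINT_le: assumes "0 \<le> s" "s \<le> t" shows "(LINT r:{s<..t}|lborel. mm r) \<le> (t - s) * B"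
proof -
  have "(LINT r:{s<..t}|lborel. mm r) \<le> (LINT r:{s<..t}|lborel. B)"
    using assms by (intro set_integral_mono mm_set_int[where b=t] set_integrable_const_Ioc) (auto intro: mm_le)
  then show ?thesis using assms by (simp add: LINT_const_Ioc)
qed

lemma U_bound: "AE \<omega> in M. \<forall>t\<ge>0. U t \<omega> \<le> U 0 \<omega> + h * B * t"
  using eqn AE_space
proof eventually_elim
  case (elim \<omega>)
  show ?case
  proof (intro allI impI)
    fix t :: real assume t: "0 \<le> t"
    have I: "0 \<le> (LINT s:{0..t}|lborel. U s \<omega>)"
      using Unn[OF elim(2)] by (intro set_integral_nonneg_real) auto
    have "(LINT s:{0..t}|lborel. mm s) \<le> (LINT s:{0..t}|lborel. B)"
      using t by (intro set_integral_mono mm_set_int[where b=t])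
        (auto intro: mm_le set_int_bdd[where g="\<lambda>_. B" and C="\<bar>B\<bar>" and a=0 and b=t])
    also have "\<dots> = t * B" using t by (rule LINT_const_Icc)
    finally have Mb: "(LINT s:{0..t}|lborel. mm s) \<le> t * B" .
    have "h * (LINT s:{0..t}|lborel. mm s) \<le> h * (t * B)" using Mb hp by (intro mult_left_mono) auto
    moreover have "0 \<le> alpha * (LINT s:{0..t}|lborel. U s \<omega>)" using I ap by simp
    moreover have "0 \<le> Jmp t \<omega>" by (rule Jmp_nn[OF elim(2)])
    ultimately show "U t \<omega> \<le> U 0 \<omega> + h * B * t" using elim(1) t by (auto simp: algebra_simps)
  qed
qed

lemma path_int:
  assumes w: "\<omega> \<in> space M" and bd: "\<forall>t\<ge>0. U t \<omega> \<le> U 0 \<omega> + h * B * t"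
    and A: "A \<in> sets borel" "A \<subseteq> {0..T}"
  shows "set_integrable lborel A (\<lambda>r. U r \<omega>)"
proof (rule set_int_bdd[where g="\<lambda>r. U (max 0 r) \<omega>" and C="U 0 \<omega> + h * B * T", OF A])
  show "(\<lambda>r. U (max 0 r) \<omega>) \<in> borel_measurable borel" using Vsec[OF w] by simp
  fix x assume x: "x \<in> A"
  then have x0: "0 \<le> x" "x \<le> T" using A by auto
  then show "U x \<omega> = U (max 0 x) \<omega>" by simp
  have "U x \<omega> \<le> U 0 \<omega> + h * B * x" using bd x0 by auto
  also have "\<dots> \<le> U 0 \<omega> + h * B * T" using x0 hp B_nn by (intro add_left_mono mult_left_mono) auto
  finally show "\<bar>U (max 0 x) \<omega>\<bar> \<le> U 0 \<omega> + h * B * T" using Unn[OF w x0(1)] x0 by simp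
qed

lemma incr: "AE \<omega> in M. \<forall>s t. 0 \<le> s \<longrightarrow> s \<le> t \<longrightarrow>
   U t \<omega> - U s \<omega> \<le> - alpha * (LINT r:{s<..t}|lborel. U r \<omega>) + h * (LINT r:{s<..t}|lborel. mm r)"
  using eqn AE_space U_bound finite_box
proof eventually_elim
  case (elim \<omega>)
  show ?case
  proof (intro allI impI)
    fix s t :: real assume s: "0 \<le> s" and st: "s \<le> t"
    have un: "{0..t} = {0..s} \<union> {s<..t}" using s st by auto
    have dj: "{0..s} \<inter> {s<..t} = {}" by auto
    have iU: "(LINT r:{0..t}|lborel. U r \<omega>) = (LINT r:{0..s}|lborel. U r \<omega>) + (LINT r:{s<..t}|lborel. U r \<omega>)"
      unfolding un by (rule set_integral_Un[OF dj]; rule path_int[OF elim(2) elim(3), where T=t]) (use st s in auto)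
    have iM: "(LINT r:{0..t}|lborel. mm r) = (LINT r:{0..s}|lborel. mm r) + (LINT r:{s<..t}|lborel. mm r)"
      unfolding un by (rule set_integral_Un[OF dj]; rule mm_set_int[where b=t]) (use st s in auto)
    have J: "Jmp s \<omega> \<le> Jmp t \<omega>" by (rule Jmp_mono[OF elim(2) elim(4) st])
    show "U t \<omega> - U s \<omega> \<le> - alpha * (LINT r:{s<..t}|lborel. U r \<omega>) + h * (LINT r:{s<..t}|lborel. mm r)"
      using elim(1)[rule_format, of t] elim(1)[rule_format, of s] s st iU iM J
      by (simp add: algebra_simps)
  qed
qed

end


locale nlset2 = nlset +
  fixes k :: real
  assumes klin: "\<forall>u\<ge>0. lam u \<le> k * u" and kh: "k * h < alpha"
    and int0: "integrable M (U 0)"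
begin

interpretation PS: pair_sigma_finite lborel M
  by (simp add: pair_sigma_finite_def sigma_finite_lborel sigma_finite_measure_axioms)

lemma U_int: assumes t: "t \<ge> 0" shows "integrable M (U t)"
proof (rule Bochner_Integration.integrable_bound)
  show "integrable M (\<lambda>\<omega>. U 0 \<omega> + h * B * t)" using int0 by simp
  show "U t \<in> borel_measurable M" by (rule meas[OF t])
  show "AE \<omega> in M. norm (U t \<omega>) \<le> norm (U 0 \<omega> + h * B * t)"
    using U_bound AE_space
  proof eventually_elim
    case (elim \<omega>)
    have "0 \<le> U t \<omega>" using Unn[OF elim(2) t] .
    moreover have "U t \<omega> \<le> U 0 \<omega> + h * B * t" using elim(1) t by auto
    ultimately show ?case by simp
  qed
qed

definition gg where "gg t = expectation (U t)"

lemma gg_nn: "t \<ge> 0 \<Longrightarrow> 0 \<le> gg t"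
  unfolding gg_def using Unn by (intro Bochner_Integration.integral_nonneg) auto

lemma mm_le_gg: assumes t: "t \<ge> 0" shows "mm t \<le> k * gg t"
proof -
  have "mm t \<le> expectation (\<lambda>\<omega>. k * U t \<omega>)"
    unfolding mm_def
  proof (rule integral_mono)
    show "integrable M (\<lambda>\<omega>. lam (U t \<omega>))" by (rule lamU_int[OF t])
    show "integrable M (\<lambda>\<omega>. k * U t \<omega>)" using U_int[OF t] by simp
    show "\<And>\<omega>. \<omega> \<in> space M \<Longrightarrow> lam (U t \<omega>) \<le> k * U t \<omega>" using klin Unn t by auto
  qed
  then show ?thesis by (simp add: gg_def)
qed

definition FF where "FF s t r \<omega> = indicator {s<..t} r * U (max 0 r) \<omega>"

lemma FF_int:
  assumes s: "0 \<le> s" and st: "s \<le> t"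
  shows "integrable (lborel \<Otimes>\<^sub>M M) (case_prod (FF s t))"
proof (rule integrableI_nonneg)
  have m: "(\<lambda>x. indicator {s<..t} (fst x) * U (max 0 (fst x)) (snd x)) \<in> borel_measurable (lborel \<Otimes>\<^sub>M M)"
    using Vmeas by measurable
  then show mm: "case_prod (FF s t) \<in> borel_measurable (lborel \<Otimes>\<^sub>M M)"
    by (simp add: FF_def split_beta')
  show "AE x in lborel \<Otimes>\<^sub>M M. 0 \<le> case_prod (FF s t) x"
    by (rule AE_I2) (auto simp: FF_def space_pair_measure intro!: mult_nonneg_nonneg Unn)
  define C where "C = (\<integral>\<^sup>+\<omega>. ennreal (U 0 \<omega> + h * B * t) \<partial>M)"
  have C: "C < \<infinity>"
  proof -
    have "C = ennreal (\<integral>\<omega>. U 0 \<omega> + h * B * t \<partial>M)"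
    proof (unfold C_def, rule nn_integral_eq_integral)
      show "integrable M (\<lambda>\<omega>. U 0 \<omega> + h * B * t)" using int0 by simp
      have "0 \<le> h * B * t" using hp B_nn s st by simp
      then show "AE \<omega> in M. 0 \<le> U 0 \<omega> + h * B * t"
        by (intro AE_I2 add_nonneg_nonneg Unn) auto
    qed
    then show ?thesis by simp
  qed
  have inner: "(\<integral>\<^sup>+\<omega>. ennreal (FF s t r \<omega>) \<partial>M) \<le> C * indicator {s<..t} r" for r
  proof (cases "r \<in> {s<..t}")
    case False then show ?thesis by (simp add: FF_def)
  next
    case True
    have "(\<integral>\<^sup>+\<omega>. ennreal (FF s t r \<omega>) \<partial>M) \<le> C"
      unfolding C_def using U_bound
    proof (intro nn_integral_mono_AE, eventually_elim)
      case (elim \<omega>)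
      have "U r \<omega> \<le> U 0 \<omega> + h * B * r" using elim True s by auto
      also have "\<dots> \<le> U 0 \<omega> + h * B * t" using True hp B_nn by (intro add_left_mono mult_left_mono) auto
      finally show ?case using True s by (auto simp: FF_def intro: ennreal_leI)
    qed
    then show ?thesis using True by simp
  qed
  have "(\<integral>\<^sup>+ x. ennreal (case_prod (FF s t) x) \<partial>(lborel \<Otimes>\<^sub>M M))
      = (\<integral>\<^sup>+ r. \<integral>\<^sup>+\<omega>. ennreal (FF s t r \<omega>) \<partial>M \<partial>lborel)"
    by (subst nn_integral_fst[symmetric]) (use mm in auto)
  also have "\<dots> \<le> (\<integral>\<^sup>+ r. C * indicator {s<..t} r \<partial>lborel)"
    by (intro nn_integral_mono inner)
  also have "\<dots> = C * emeasure lborel {s<..t}" by (rule nn_integral_cmult_indicator) simp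
  also have "\<dots> < \<infinity>" using C st by (simp add: ennreal_mult_less_top)
  finally show "(\<integral>\<^sup>+ x. ennreal (case_prod (FF s t) x) \<partial>(lborel \<Otimes>\<^sub>M M)) < \<infinity>" .
qed

lemma FF_r: "(\<integral>r. FF s t r \<omega> \<partial>lborel) = (LINT r:{s<..t}|lborel. U r \<omega>)" if "0 \<le> s"
  unfolding set_lebesgue_integral_def FF_def using that
  by (intro Bochner_Integration.integral_cong) (auto simp: indicator_def)

lemma FF_w: "(\<integral>\<omega>. FF s t r \<omega> \<partial>M) = indicator {s<..t} r * gg r" if "0 \<le> s"
  unfolding FF_def gg_def using that by (auto simp: indicator_def)

lemma gg_set_int: assumes "0 \<le> s" "s \<le> t" shows "set_integrable lborel {s<..t} gg"
  using PS.integrable_fst[OF FF_int[OF assms]] FF_w[OF assms(1)]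
  unfolding set_integrable_def by simp

lemma E_path: assumes "0 \<le> s" "s \<le> t"
  shows "integrable M (\<lambda>\<omega>. LINT r:{s<..t}|lborel. U r \<omega>)"
    and "(\<integral>\<omega>. (LINT r:{s<..t}|lborel. U r \<omega>) \<partial>M) = (LINT r:{s<..t}|lborel. gg r)"
proof -
  show "integrable M (\<lambda>\<omega>. LINT r:{s<..t}|lborel. U r \<omega>)"
    using PS.integrable_snd[OF FF_int[OF assms]] FF_r[OF assms(1)] by simp
  have "(\<integral>\<omega>. (\<integral>r. FF s t r \<omega> \<partial>lborel) \<partial>M) = (\<integral>r. (\<integral>\<omega>. FF s t r \<omega> \<partial>M) \<partial>lborel)"
    by (rule PS.Fubini_integral[OF FF_int[OF assms]])
  then show "(\<integral>\<omega>. (LINT r:{s<..t}|lborel. U r \<omega>) \<partial>M) = (LINT r:{s<..t}|lborel. gg r)"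
    using FF_r[OF assms(1)] FF_w[OF assms(1)] by (simp add: set_lebesgue_integral_def)
qed

lemma gg_incr: assumes s: "0 \<le> s" and st: "s \<le> t"
  shows "gg t - gg s \<le> - (alpha - k * h) * (LINT r:{s<..t}|lborel. gg r)"
proof -
  have t: "0 \<le> t" using s st by linarith
  have "gg t - gg s = (\<integral>\<omega>. U t \<omega> - U s \<omega> \<partial>M)"
    unfolding gg_def using U_int[OF t] U_int[OF s] by simp
  also have "\<dots> \<le> (\<integral>\<omega>. - alpha * (LINT r:{s<..t}|lborel. U r \<omega>) + h * (LINT r:{s<..t}|lborel. mm r) \<partial>M)"
  proof (rule integral_mono_AE)
    show "integrable M (\<lambda>\<omega>. U t \<omega> - U s \<omega>)" using U_int[OF t] U_int[OF s] by simp
    show "integrable M (\<lambda>\<omega>. - alpha * (LINT r:{s<..t}|lborel. U r \<omega>) + h * (LINT r:{s<..t}|lborel. mm r))"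
      using E_path(1)[OF s st] by simp
    show "AE \<omega> in M. U t \<omega> - U s \<omega> \<le> - alpha * (LINT r:{s<..t}|lborel. U r \<omega>) + h * (LINT r:{s<..t}|lborel. mm r)"
      using incr by eventually_elim (use s st in auto)
  qed
  also have "\<dots> = - alpha * (LINT r:{s<..t}|lborel. gg r) + h * (LINT r:{s<..t}|lborel. mm r)"
    using E_path[OF s st] by (simp add: prob_space)
  also have "\<dots> \<le> - alpha * (LINT r:{s<..t}|lborel. gg r) + h * (k * (LINT r:{s<..t}|lborel. gg r))"
  proof -
    have "(LINT r:{s<..t}|lborel. mm r) \<le> (LINT r:{s<..t}|lborel. k * gg r)"
      using s by (intro set_integral_mono mm_set_int[where b=t] set_integrable_mult_right gg_set_int[OF s st] mm_le_gg)
        auto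
    then show ?thesis using hp by (simp add: mult_left_mono)
  qed
  finally show ?thesis by (simp add: algebra_simps)
qed

lemma gg_decay: assumes t: "t \<ge> 0" shows "gg t \<le> exp (- (alpha - k * h) * t) * gg 0"
proof (rule exp_decay[OF _ t])
  show "0 < alpha - k * h" using kh by simp
  show "0 \<le> s \<Longrightarrow> 0 \<le> gg s" for s by (rule gg_nn)
  fix s t' :: real assume s: "0 \<le> s" and st: "s \<le> t'"
  have "gg t' * (1 + (alpha - k*h) * (t' - s)) \<le> gg s + 0 * (t' - s) * (1 + (alpha - k*h) * (t' - s))"
  proof (rule step_bound[OF st])
    show "0 \<le> alpha - k * h" using kh by simp
    show "0 \<le> gg r" if "r \<in> {s..t'}" for r using that s by (intro gg_nn) auto
    show "set_integrable lborel {s<..t'} gg" by (rule gg_set_int[OF s st])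
    show "gg t' - gg r \<le> - (alpha - k * h) * (LINT x:{r<..t'}|lborel. gg x) + 0 * (t' - r)" if "r \<in> {s..t'}" for r
      using gg_incr[of r t'] that s by auto
  qed simp
  then show "gg t' * (1 + (alpha - k * h) * (t' - s)) \<le> gg s" by simp
qed

end


context nlset
begin

lemma one_step: "AE \<omega> in M. U 1 \<omega> \<le> U 0 \<omega> / (1 + alpha) + h * B"
  using incr U_bound AE_space
proof eventually_elim
  case (elim \<omega>)
  have "U 1 \<omega> * (1 + alpha * (1 - 0)) \<le> U 0 \<omega> + (h * B) * (1 - 0) * (1 + alpha * (1 - 0))"
  proof (rule step_bound[where f="\<lambda>r. U r \<omega>"])
    show "0 \<le> alpha" using ap by simp
    show "0 \<le> h * B" using hp B_nn by simp
    show "0 \<le> U r \<omega>" if "r \<in> {0..1}" for r using that Unn[OF elim(3)] by auto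
    show "set_integrable lborel {0<..1} (\<lambda>r. U r \<omega>)"
      by (rule path_int[OF elim(3) elim(2), where T=1]) auto
    show "U 1 \<omega> - U r \<omega> \<le> - alpha * (LINT x:{r<..1}|lborel. U x \<omega>) + h * B * (1 - r)" if r: "r \<in> {0..1}" for r
    proof -
      have "U 1 \<omega> - U r \<omega> \<le> - alpha * (LINT x:{r<..1}|lborel. U x \<omega>) + h * (LINT x:{r<..1}|lborel. mm x)"
        using elim(1) r by auto
      moreover have "h * (LINT x:{r<..1}|lborel. mm x) \<le> h * ((1 - r) * B)"
        using mm_LINT_le[of r 1] r hp by (intro mult_left_mono) auto
      ultimately show ?thesis by (simp add: algebra_simps)
    qed
  qed simp
  then have "U 1 \<omega> * (1 + alpha) \<le> U 0 \<omega> + h * B * (1 + alpha)" by simp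
  then have "U 1 \<omega> \<le> (U 0 \<omega> + h * B * (1 + alpha)) / (1 + alpha)"
    using ap by (simp add: pos_le_divide_eq)
  also have "\<dots> = U 0 \<omega> / (1 + alpha) + h * B" using ap by (simp add: field_simps)
  finally show ?case .
qed

lemma stationary_bounded:
  assumes stat: "\<forall>t\<ge>0. distr M borel (U t) = distr M borel (U 0)"
  shows "\<exists>K. AE \<omega> in M. U 0 \<omega> \<le> K"
proof -
  define C where "C = h * B"
  define K where "K = ((1 + alpha) * C + 1) / alpha"
  define p where "p x = prob {\<omega> \<in> space M. x < U 0 \<omega>}" for x
  have m0: "U 0 \<in> borel_measurable M" by (rule meas) simp
  have m1: "U 1 \<in> borel_measurable M" by (rule meas) simp
  have sets0: "{\<omega> \<in> space M. x < U 0 \<omega>} \<in> sets M" for x using m0 by measurable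
  have pd: "prob {\<omega> \<in> space M. x < U t \<omega>} = measure (distr M borel (U t)) {x<..}" if "t \<ge> 0" for x t
  proof -
    have "U t -` {x<..} \<inter> space M = {\<omega> \<in> space M. x < U t \<omega>}" by auto
    then show ?thesis using meas[OF that] by (subst measure_distr) auto
  qed
  have step: "p x \<le> p (x + 1)" if x: "K \<le> x" for x
  proof -
    have "p x = prob {\<omega> \<in> space M. x < U 1 \<omega>}"
    proof -
      have "distr M borel (U 1) = distr M borel (U 0)" by (rule stat[rule_format]) simp
      then show ?thesis unfolding p_def using pd[of 0 x] pd[of 1 x] by simp
    qed
    also have "\<dots> \<le> p (x + 1)"
      unfolding p_def
    proof (rule finite_measure_mono_AE[OF _ sets0])
      have "K * alpha \<le> x * alpha" using x ap by (intro mult_right_mono) auto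
      moreover have "K * alpha = (1 + alpha) * C + 1" unfolding K_def using ap by simp
      ultimately have ax: "(1 + alpha) * C + 1 \<le> alpha * x" by (simp add: mult.commute)
      show "AE \<omega> in M. \<omega> \<in> {\<omega> \<in> space M. x < U 1 \<omega>} \<longrightarrow> \<omega> \<in> {\<omega> \<in> space M. x + 1 < U 0 \<omega>}"
        using one_step
      proof eventually_elim
        case (elim \<omega>)
        show ?case
        proof
          assume w: "\<omega> \<in> {\<omega> \<in> space M. x < U 1 \<omega>}"
          then have "x < U 0 \<omega> / (1 + alpha) + C" using elim unfolding C_def by auto
          then have "x - C < U 0 \<omega> / (1 + alpha)" by simp
          then have "(x - C) * (1 + alpha) < U 0 \<omega>" using ap by (simp add: pos_less_divide_eq)
          moreover have "x + 1 \<le> (x - C) * (1 + alpha)" using ax by (simp add: algebra_simps)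
          ultimately have "x + 1 < U 0 \<omega>" by linarith
          then show "\<omega> \<in> {\<omega> \<in> space M. x + 1 < U 0 \<omega>}" using w by simp
        qed
      qed
    qed
    finally show ?thesis .
  qed
  have ind: "p K \<le> p (K + real n)" for n
  proof (induction n)
    case (Suc n)
    have "p (K + real n) \<le> p (K + real n + 1)" by (rule step) simp
    moreover have "K + real n + 1 = K + real (Suc n)" by simp
    ultimately show ?case using Suc by (metis order.trans)
  qed simp
  have lim: "(\<lambda>n. p (K + real n)) \<longlonglongrightarrow> 0"
  proof -
    have "(\<lambda>n. measure M {\<omega> \<in> space M. K + real n < U 0 \<omega>}) \<longlonglongrightarrow> measure M (\<Inter>n. {\<omega> \<in> space M. K + real n < U 0 \<omega>})"
    proof (rule finite_Lim_measure_decseq)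
      show "range (\<lambda>n. {\<omega> \<in> space M. K + real n < U 0 \<omega>}) \<subseteq> sets M" using sets0 by auto
      show "decseq (\<lambda>n. {\<omega> \<in> space M. K + real n < U 0 \<omega>})"
        unfolding decseq_def by (auto intro: order.strict_trans1)
    qed
    moreover have "(\<Inter>n. {\<omega> \<in> space M. K + real n < U 0 \<omega>}) = {}"
    proof (safe)
      fix \<omega> assume "\<omega> \<in> (\<Inter>n. {\<omega> \<in> space M. K + real n < U 0 \<omega>})"
      moreover obtain n :: nat where "U 0 \<omega> - K \<le> real n" using real_arch_simple by blast
      ultimately have "K + real n < U 0 \<omega>" "U 0 \<omega> - K \<le> real n" by auto
      then show "\<omega> \<in> {}" by linarith
    qed
    ultimately show ?thesis unfolding p_def by simp
  qed
  have "p K \<le> 0" by (rule LIMSEQ_le_const[OF lim]) (use ind in auto)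
  then have "p K = 0" unfolding p_def by (simp add: measure_nonneg antisym)
  then have "AE \<omega> in M. \<omega> \<notin> {\<omega> \<in> space M. K < U 0 \<omega>}"
    unfolding p_def using prob_eq_0[OF sets0] by simp
  then have "AE \<omega> in M. U 0 \<omega> \<le> K" using AE_space by eventually_elim auto
  then show ?thesis by blast
qed

end


lemma (in nlset2) W1_bound:
  assumes t: "t \<ge> 0"
  shows "W1 (distr M borel (U t)) (return borel 0)
      \<le> ennreal (exp (- (alpha - k * h) * t)) * W1 (distr M borel (U 0)) (return borel 0)"
proof -
  have W: "W1 (distr M borel (U s)) (return borel 0) = ennreal (gg s)" if s: "s \<ge> 0" for s
  proof -
    have "W1 (distr M borel (U s)) (return borel 0) = (\<integral>\<^sup>+\<omega>. ennreal \<bar>U s \<omega>\<bar> \<partial>M)"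
      by (rule W1_dirac[OF prob_space_axioms meas[OF s]])
    also have "\<dots> = (\<integral>\<^sup>+\<omega>. ennreal (U s \<omega>) \<partial>M)"
      by (rule nn_integral_cong) (use Unn s in auto)
    also have "\<dots> = ennreal (gg s)"
      unfolding gg_def by (rule nn_integral_eq_integral[OF U_int[OF s]]) (use Unn s in \<open>auto intro!: AE_I2\<close>)
    finally show ?thesis .
  qed
  have "ennreal (gg t) \<le> ennreal (exp (- (alpha - k * h) * t) * gg 0)"
    by (rule ennreal_leI[OF gg_decay[OF t]])
  also have "\<dots> = ennreal (exp (- (alpha - k * h) * t)) * ennreal (gg 0)"
    by (rule ennreal_mult) (auto intro: gg_nn)
  finally show ?thesis using W[OF t] W[of 0] by simp
qed

lemma (in nlset2) gg_distr: "t \<ge> 0 \<Longrightarrow> gg t = (\<integral>x. x \<partial>distr M borel (U t))"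
  unfolding gg_def by (subst integral_distr) (auto intro: meas)

theorem mainTheorem3:
  fixes M :: "'a measure" and Npts :: "'a \<Rightarrow> (real \<times> real) set"
    and lam :: "real \<Rightarrow> real" and alpha h k :: real
    and U :: "real \<Rightarrow> 'a \<Rightarrow> real"
  assumes "prob_space M"
    and "poisson_random_measure M Npts"
    and "alpha > 0" and "h > 0"
    and "\<forall>u\<ge>0. 0 \<le> lam u"
    and "\<exists>B. \<forall>u\<ge>0. lam u \<le> B"
    and "mono_on {0..} lam"
    and "\<exists>L. L-lipschitz_on {0..} lam"
    and "lam 0 = 0"
    and "k > 0" and "\<forall>u\<ge>0. lam u \<le> k * u" and "k * h < alpha"
    and "NL_solution M Npts alpha h lam U"
  shows "((\<forall>t\<ge>0. distr M borel (U t) = distr M borel (U 0))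
            \<longrightarrow> distr M borel (U 0) = return borel 0)
       \<and> (integrable M (U 0) \<longrightarrow>
            (\<forall>t\<ge>0. W1 (distr M borel (U t)) (return borel 0)
                 \<le> ennreal (exp (- (alpha - k * h) * t)) * W1 (distr M borel (U 0)) (return borel 0)))"
proof -
  obtain B where B: "\<forall>u\<ge>0. lam u \<le> B" using assms(6) by blast
  obtain L where L: "L-lipschitz_on {0..} lam" using assms(8) by blast
  have lamc: "continuous_on {0..} lam" by (rule lipschitz_on_continuous_on[OF L])
  interpret N: nlset M Npts lam alpha h B U
    by (intro nlset.intro nlset_axioms.intro) (use assms B lamc in auto)
  have part2: "\<forall>t\<ge>0. W1 (distr M borel (U t)) (return borel 0)
                 \<le> ennreal (exp (- (alpha - k * h) * t)) * W1 (distr M borel (U 0)) (return borel 0)"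
    if int0: "integrable M (U 0)"
  proof -
    interpret N2: nlset2 M Npts lam alpha h B U k
      by (intro nlset2.intro nlset2_axioms.intro N.nlset_axioms) (use assms int0 in auto)
    show ?thesis using N2.W1_bound by auto
  qed
  have part1: "distr M borel (U 0) = return borel 0"
    if stat: "\<forall>t\<ge>0. distr M borel (U t) = distr M borel (U 0)"
  proof -
    obtain K where K: "AE \<omega> in M. U 0 \<omega> \<le> K" using N.stationary_bounded[OF stat] by blast
    have int0: "integrable M (U 0)"
    proof (rule N.integrable_const_bound[where B=K])
      show "AE \<omega> in M. norm (U 0 \<omega>) \<le> K" using K AE_space
        by eventually_elim (use N.Unn in auto)
      show "U 0 \<in> borel_measurable M" by (rule N.meas) simp
    qed
    interpret N2: nlset2 M Npts lam alpha h B U k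
      by (intro nlset2.intro nlset2_axioms.intro N.nlset_axioms) (use assms int0 in auto)
    have d1: "distr M borel (U 1) = distr M borel (U 0)" by (rule stat[rule_format]) simp
    have "N2.gg 1 = N2.gg 0" using N2.gg_distr[of 1] N2.gg_distr[of 0] d1 by simp
    moreover have "N2.gg 1 \<le> exp (- (alpha - k * h) * 1) * N2.gg 0" by (rule N2.gg_decay) simp
    moreover have "exp (- (alpha - k * h) * 1) < 1" using assms(12) by simp
    moreover have "0 \<le> N2.gg 0" by (rule N2.gg_nn) simp
    ultimately have g0: "N2.gg 0 = 0"
    proof -
      assume a: "N2.gg 1 = N2.gg 0" "N2.gg 1 \<le> exp (- (alpha - k * h) * 1) * N2.gg 0"
        "exp (- (alpha - k * h) * 1) < 1" "0 \<le> N2.gg 0"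
      show ?thesis
      proof (rule ccontr)
        assume "N2.gg 0 \<noteq> 0"
        then have "0 < N2.gg 0" using a(4) by simp
        then have "exp (- (alpha - k * h) * 1) * N2.gg 0 < 1 * N2.gg 0"
          by (intro mult_strict_right_mono a(3))
        then show False using a(1,2) by simp
      qed
    qed
    have nnAE: "AE \<omega> in M. 0 \<le> U 0 \<omega>" by (rule AE_I2) (use N.Unn in auto)
    have "AE \<omega> in M. U 0 \<omega> = 0"
      using g0 integral_nonneg_eq_0_iff_AE[OF int0 nnAE] unfolding N2.gg_def by simp
    then have "distr M borel (U 0) = distr M borel (\<lambda>_. 0::real)"
      by (intro distr_cong_AE) (auto intro: N.meas)
    also have "\<dots> = return borel 0" by simp
    finally show ?thesis .
  qed
  show ?thesis using part1 part2 by blast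
qed


end
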